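(* Let $0<q<1$, let $m,n$ be positive integers, let $s_1,\dots,s_m>0$ be real and let $b_1,\dots,b_m$ be complex numbers with $|b_k|>1$ for all $k$. Put $s=s_1+\cdots+s_m$. Then \[ n^m\,\lambda_{q^n}\begin{bmatrix}s_1,\dots,s_m\\ b_1^n,\dots,b_m^n\end{bmatrix} = [n]_q^{\,s}\sum_{\varepsilon_1^n=\cdots=\varepsilon_m^n=1} \lambda_q\begin{bmatrix}s_1,\dots,s_m\\ \varepsilon_1b_1,\dots,\varepsilon_mb_m\end{bmatrix}, \] where the sum is over all $n^m$ tuples $(\varepsilon_1,\dots,\varepsilon_m)$ of complex $n$-th roots of unity.
   Context: For $0<p<1$ and real $x$ let $[x]_p := (1-p^x)/(1-p)$. For real $s_1,\dots,s_m>0$ and complex $b_1,\dots,b_m$ with $|b_k|>1$, the multiple $p$-polylogarithm is \[ \lambda_p\begin{bmatrix}s_1,\dots,s_m\\ b_1,\dots,b_m\end{bmatrix} := \sum_{\nu_1,\dots,\nu_m\ge1}\prod_{k=1}^m b_k^{-\nu_k}\Big[\sum_{j=k}^m\nu_j\Big]_p^{-s_k}, \] the sum being over positive integers $\nu_1,\dots,\nu_m$. In the claim it is used with $p=q$ and with $p=q^n$. *)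

theory Defs
  imports "HOL-Analysis.Analysis"
begin

definition qint :: "real \<Rightarrow> real \<Rightarrow> real" where
  "qint p x = (1 - p powr x) / (1 - p)"

text \<open>Index set of the multiple sum: tuples (nu_0,...,nu_{m-1}) of positive integers,
  encoded as functions nat => nat that are zero outside {..<m}.\<close>
definition pos_tuples :: "nat \<Rightarrow> (nat \<Rightarrow> nat) set" where
  "pos_tuples m = {\<nu>. (\<forall>k<m. 1 \<le> \<nu> k) \<and> (\<forall>k\<ge>m. \<nu> k = 0)}"

text \<open>Multiple p-polylogarithm; s and b are indexed 0..m-1.\<close>
definition mplog :: "real \<Rightarrow> nat \<Rightarrow> (nat \<Rightarrow> real) \<Rightarrow> (nat \<Rightarrow> complex) \<Rightarrow> complex" where
  "mplog p m s b = infsum (\<lambda>\<nu>. \<Prod>k<m. b k powi (- int (\<nu> k)) *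
       complex_of_real (qint p (real (\<Sum>j\<in>{k..<m}. \<nu> j)) powr (- s k))) (pos_tuples m)"

end

theory Submission
  imports Defs
begin

lemma roots_powi_sum:
  assumes n: "n > 0"
  shows "(\<Sum>z\<in>{z::complex. z ^ n = 1}. z powi (- int \<mu>)) = (if n dvd \<mu> then of_nat n else 0)"
proof -
  define c where "c = cis (- (2 * pi * real \<mu> / real n))"
  have "(\<Sum>z\<in>{z::complex. z ^ n = 1}. z powi (- int \<mu>)) = (\<Sum>k<n. cis (2 * pi * real k / real n) powi (- int \<mu>))"
    by (rule sum.reindex_bij_betw [symmetric, OF Complex.bij_betw_roots_unity[OF n]])
  also have "\<dots> = (\<Sum>k<n. c ^ k)"
    by (intro sum.cong refl) (simp add: c_def cis_power_int Complex.DeMoivre, simp add: algebra_simps)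
  finally have S: "(\<Sum>z\<in>{z::complex. z ^ n = 1}. z powi (- int \<mu>)) = (\<Sum>k<n. c ^ k)" .
  have cn: "c ^ n = 1"
  proof -
    have "c ^ n = cis (2 * pi * (- real \<mu>))" using n by (simp add: c_def Complex.DeMoivre)
    also have "\<dots> = 1" by (rule cis_multiple_2pi) (metis Ints_minus Ints_of_nat)
    finally show ?thesis .
  qed
  show ?thesis
  proof (cases "n dvd \<mu>")
    case True
    then obtain t where t: "\<mu> = n * t" by blast
    have "c = cis (2 * pi * (- real t))" using n by (simp add: c_def t mult.assoc)
    also have "\<dots> = 1" by (rule cis_multiple_2pi) (metis Ints_minus Ints_of_nat)
    finally have "c = 1" .
    then show ?thesis using S True by simp
  next
    case False
    have "c \<noteq> 1"
    proof
      assume "c = 1"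
      then have "cos (- (2 * pi * real \<mu> / real n)) = 1"
        unfolding c_def by (metis cis.sel(1) one_complex.sel(1))
      then obtain k :: int where k: "- (2 * pi * real \<mu> / real n) = real_of_int k * 2 * pi"
        using cos_one_2pi_int by blast
      then have "pi * (- real \<mu>) = pi * (real_of_int k * real n)" using n by (simp add: field_simps)
      then have "- real \<mu> = real_of_int k * real n" by (metis mult_cancel_left pi_neq_zero)
      then have "- int \<mu> = k * int n" by (metis of_int_eq_iff of_int_minus of_int_mult of_int_of_nat_eq)
      then have "int n dvd int \<mu>" by (metis dvd_minus_iff dvd_triv_right)
      with False show False by simp
    qed
    then have "(\<Sum>k<n. c ^ k) = (c ^ n - 1) / (c - 1)" by (subst geometric_sum) auto
    then show ?thesis using S cn False by simp
  qed
qed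

lemma geo_summable_on:
  fixes r :: real
  assumes "0 \<le> r" "r < 1"
  shows "(\<lambda>j::nat. r ^ j) summable_on A"
proof -
  have "summable (\<lambda>j::nat. r ^ j)" using assms by (intro summable_geometric) simp
  then have "(\<lambda>j::nat. r ^ j) summable_on UNIV"
    using assms by (subst summable_on_UNIV_nonneg_real_iff) auto
  then show ?thesis by (rule summable_on_subset_banach) simp
qed

lemma prod_geo_summable:
  fixes r :: "nat \<Rightarrow> real"
  assumes "\<And>k. k < m \<Longrightarrow> 0 \<le> r k" "\<And>k. k < m \<Longrightarrow> r k < 1"
  shows "(\<lambda>\<nu>. \<Prod>k<m. r k ^ \<nu> k) summable_on pos_tuples m"
proof -
  define \<phi> :: "(nat \<Rightarrow> nat) \<Rightarrow> (nat \<Rightarrow> nat)" where "\<phi> \<nu> = (\<lambda>k. if k < m then \<nu> k else 0)" for \<nu>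
  define P where "P = PiE {..<m} (\<lambda>_. {1::nat..})"
  have inj: "inj_on \<phi> P"
  proof
    fix x y assume xy: "x \<in> P" "y \<in> P" "\<phi> x = \<phi> y"
    show "x = y"
    proof
      fix k show "x k = y k"
      proof (cases "k < m")
        case True
        have "\<phi> x k = \<phi> y k" using xy(3) by simp
        then show ?thesis using True by (simp add: \<phi>_def)
      next
        case False
        then show ?thesis using xy(1,2) by (auto simp: P_def PiE_def extensional_def)
      qed
    qed
  qed
  have img: "\<phi> ` P = pos_tuples m"
  proof safe
    fix \<nu> assume "\<nu> \<in> P" then show "\<phi> \<nu> \<in> pos_tuples m"
      by (auto simp: P_def \<phi>_def pos_tuples_def)
  next
    fix \<nu> assume a: "\<nu> \<in> pos_tuples m"
    have "\<phi> (restrict \<nu> {..<m}) = \<nu>"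
      using a by (auto simp: \<phi>_def pos_tuples_def fun_eq_iff)
    moreover have "restrict \<nu> {..<m} \<in> P" using a by (auto simp: P_def pos_tuples_def)
    ultimately show "\<nu> \<in> \<phi> ` P" by (metis image_eqI)
  qed
  have "Infinite_Set_Sum.abs_summable_on (\<lambda>g. \<Prod>k\<in>{..<m}. r k ^ g k) P"
    unfolding P_def
  proof (rule abs_summable_on_prod_PiE)
    fix k assume "k \<in> {..<m}"
    then have "(\<lambda>j::nat. r k ^ j) summable_on {1..}"
      using assms by (intro geo_summable_on) auto
    then have "Infinite_Sum.abs_summable_on (\<lambda>j::nat. r k ^ j) {1..}"
      using \<open>k \<in> {..<m}\<close> assms by (simp add: abs_mult)
      
    then show "Infinite_Set_Sum.abs_summable_on (\<lambda>j::nat. r k ^ j) {1..}"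
      using abs_summable_equivalent[of "\<lambda>j::nat. r k ^ j" "{1..}"] by simp
  qed auto
  then have "Infinite_Sum.abs_summable_on (\<lambda>g. \<Prod>k\<in>{..<m}. r k ^ g k) P"
    using abs_summable_equivalent[of "\<lambda>g. \<Prod>k\<in>{..<m}. r k ^ g k" P] by simp
  then have s1: "(\<lambda>g. \<Prod>k\<in>{..<m}. r k ^ g k) summable_on P"
    by (rule abs_summable_summable)
  have "((\<lambda>\<nu>. \<Prod>k<m. r k ^ \<nu> k) \<circ> \<phi>) = (\<lambda>g. \<Prod>k\<in>{..<m}. r k ^ g k)"
    by (auto simp: fun_eq_iff \<phi>_def intro!: prod.cong)
  with s1 have "((\<lambda>\<nu>. \<Prod>k<m. r k ^ \<nu> k) \<circ> \<phi>) summable_on P" by simp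
  then have "(\<lambda>\<nu>. \<Prod>k<m. r k ^ \<nu> k) summable_on (\<phi> ` P)"
    using summable_on_reindex[OF inj] by blast
  then show ?thesis using img by simp
qed

definition T :: "real \<Rightarrow> nat \<Rightarrow> (nat \<Rightarrow> real) \<Rightarrow> (nat \<Rightarrow> complex) \<Rightarrow> (nat \<Rightarrow> nat) \<Rightarrow> complex" where
  "T p m s b \<nu> = (\<Prod>k<m. b k powi (- int (\<nu> k)) *
       complex_of_real (qint p (real (\<Sum>j\<in>{k..<m}. \<nu> j)) powr (- s k)))"

lemma mplog_T: "mplog p m s b = infsum (T p m s b) (pos_tuples m)"
  unfolding mplog_def T_def by simp

lemma qint_ge1:
  assumes "0 < p" "p < 1" "1 \<le> x"
  shows "1 \<le> qint p x"
proof -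
  have "p powr x \<le> p powr 1" using assms by (intro powr_mono') auto
  then have "p powr x \<le> p" using assms by simp
  then show ?thesis using assms by (simp add: qint_def field_simps)
qed

lemma T_summable:
  assumes p: "0 < p" "p < 1" and s: "\<And>k. k < m \<Longrightarrow> 0 \<le> s k"
    and b: "\<And>k. k < m \<Longrightarrow> 1 < norm (b k)"
  shows "T p m s b summable_on pos_tuples m"
proof -
  define r where "r k = inverse (norm (b k))" for k
  have g: "(\<lambda>\<nu>. \<Prod>k<m. r k ^ \<nu> k) summable_on pos_tuples m"
    using b by (intro prod_geo_summable) (auto simp: r_def inverse_less_1_iff)
  have bound: "norm (T p m s b \<nu>) \<le> (\<Prod>k<m. r k ^ \<nu> k)" if \<nu>: "\<nu> \<in> pos_tuples m" for \<nu>
  proof -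
    have "norm (T p m s b \<nu>) = (\<Prod>k<m. norm (b k powi (- int (\<nu> k))) *
       norm (complex_of_real (qint p (real (\<Sum>j\<in>{k..<m}. \<nu> j)) powr (- s k))))"
      unfolding T_def by (simp add: prod_norm[symmetric] norm_mult del: of_nat_sum)
    also have "\<dots> \<le> (\<Prod>k<m. r k ^ \<nu> k)"
    proof (rule prod_mono)
      fix k assume k: "k \<in> {..<m}"
      have N: "1 \<le> real (\<Sum>j\<in>{k..<m}. \<nu> j)"
      proof -
        have "\<nu> k \<le> (\<Sum>j\<in>{k..<m}. \<nu> j)" using k by (intro member_le_sum) auto
        moreover have "1 \<le> \<nu> k" using \<nu> k by (auto simp: pos_tuples_def)
        ultimately show ?thesis by linarith
      qed
      have Q: "1 \<le> qint p (real (\<Sum>j\<in>{k..<m}. \<nu> j))" by (rule qint_ge1[OF p N])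
      define QQ where "QQ = qint p (real (\<Sum>j\<in>{k..<m}. \<nu> j)) powr (- s k)"
      have Q1: "QQ \<le> 1"
        unfolding QQ_def using ge_one_powr_ge_zero[OF Q, of "s k"] s k by (auto simp: powr_minus inverse_le_1_iff)
      have Q0: "0 \<le> QQ" unfolding QQ_def by simp
      have nb: "norm (b k powi (- int (\<nu> k))) = r k ^ \<nu> k"
        by (simp add: r_def norm_power_int power_int_minus power_inverse norm_inverse norm_power)
      have r0: "0 \<le> r k ^ \<nu> k" by (simp add: r_def)
      show "0 \<le> norm (b k powi (- int (\<nu> k))) *
          norm (complex_of_real (qint p (real (\<Sum>j\<in>{k..<m}. \<nu> j)) powr (- s k))) \<and>
        norm (b k powi (- int (\<nu> k))) *
          norm (complex_of_real (qint p (real (\<Sum>j\<in>{k..<m}. \<nu> j)) powr (- s k))) \<le> r k ^ \<nu> k"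
        unfolding QQ_def[symmetric] nb using Q0 Q1 r0 by (simp add: mult_left_le)
    qed
    finally show ?thesis .
  qed
  have "(\<lambda>\<nu>. norm (T p m s b \<nu>)) summable_on pos_tuples m"
    by (rule summable_on_comparison_test[OF g]) (use bound in auto)
  then show ?thesis by (rule abs_summable_summable)
qed

lemma infsum_finite_sum:
  fixes f :: "'i \<Rightarrow> 'a \<Rightarrow> complex"
  assumes "finite I" "\<And>i. i \<in> I \<Longrightarrow> f i summable_on A"
  shows "infsum (\<lambda>x. \<Sum>i\<in>I. f i x) A = (\<Sum>i\<in>I. infsum (f i) A)"
proof -
  have "((\<lambda>x. \<Sum>i\<in>I. f i x) has_sum (\<Sum>i\<in>I. infsum (f i) A)) A"
    using assms
  proof (induction I rule: finite_induct)
    case empty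
    then show ?case by (simp add: has_sum_0)
  next
    case (insert i I)
    have "((\<lambda>x. f i x + (\<Sum>i\<in>I. f i x)) has_sum (infsum (f i) A + (\<Sum>i\<in>I. infsum (f i) A))) A"
      using insert by (intro has_sum_add) (auto intro: has_sum_infsum)
    then show ?case using insert by simp
  qed
  then show ?thesis by (rule infsumI)
qed

lemma qint_nonneg:
  assumes "0 < p" "p < 1" "0 \<le> x"
  shows "0 \<le> qint p x"
proof -
  have "p powr x \<le> p powr 0" using assms by (intro powr_mono') auto
  then show ?thesis using assms by (simp add: qint_def)
qed

lemma qint_mult:
  assumes q: "0 < q" "q < 1" and n: "0 < n"
  shows "qint q (real n * x) = qint q (real n) * qint (q ^ n) x"
proof -
  have qn: "q ^ n = q powr real n" using q by (simp add: powr_realpow)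
  have "q powr real n < q powr 0" using q n by (intro powr_less_mono') auto
  then have lt: "q powr real n < 1" using q by simp
  have "(q ^ n) powr x = q powr (real n * x)" by (simp add: qn powr_powr)
  moreover have "(1 - q powr real n) / (1 - q) * ((1 - q powr (real n * x)) / (1 - q powr real n))
      = (1 - q powr (real n * x)) / (1 - q)" using lt by simp
  ultimately show ?thesis unfolding qint_def qn by simp
qed

lemma prod_ifs:
  fixes c :: complex
  shows "(\<Prod>k<m. if P k then c else 0) = (if (\<forall>k<m. P k) then c ^ m else 0)"
proof (cases "\<forall>k<m. P k")
  case True
  then have "(\<Prod>k<m. if P k then c else 0) = (\<Prod>k<m. c)" by (intro prod.cong) auto
  then show ?thesis using True by simp
next
  case False
  then obtain k where "k < m" "\<not> P k" by blast
  then have "(\<Prod>k<m. if P k then c else 0) = 0" by (intro prod_zero) auto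
  then show ?thesis using False by simp
qed

lemma T_twist:
  "T p m s (\<lambda>k. \<epsilon> k * b k) \<mu> = (\<Prod>k<m. \<epsilon> k powi (- int (\<mu> k))) * T p m s b \<mu>"
  unfolding T_def by (simp add: power_int_mult_distrib prod.distrib mult.assoc)

lemma T_scale:
  assumes q: "0 < q" "q < 1" and n: "0 < n"
  shows "T q m s b (\<lambda>k. n * \<nu> k) =
     complex_of_real (qint q (real n) powr (- (\<Sum>k<m. s k))) * T (q ^ n) m s (\<lambda>k. b k ^ n) \<nu>"
proof -
  have qn: "0 < q ^ n" "q ^ n < 1" using q n by (auto intro: power_less1_D power_Suc_less_one simp: power_less_one_iff)
  have fac: "b k powi (- int (n * \<nu> k)) *
       complex_of_real (qint q (real (\<Sum>j\<in>{k..<m}. n * \<nu> j)) powr (- s k)) =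
     complex_of_real (qint q (real n) powr (- s k)) *
      ((b k ^ n) powi (- int (\<nu> k)) *
       complex_of_real (qint (q ^ n) (real (\<Sum>j\<in>{k..<m}. \<nu> j)) powr (- s k)))" for k
  proof -
    have e1: "b k powi (- int (n * \<nu> k)) = (b k ^ n) powi (- int (\<nu> k))"
      by (simp add: power_int_power)
    have "real (\<Sum>j\<in>{k..<m}. n * \<nu> j) = real n * real (\<Sum>j\<in>{k..<m}. \<nu> j)"
      by (simp add: sum_distrib_left[symmetric])
    then have "qint q (real (\<Sum>j\<in>{k..<m}. n * \<nu> j)) =
        qint q (real n) * qint (q ^ n) (real (\<Sum>j\<in>{k..<m}. \<nu> j))"
      using qint_mult[OF q n] by simp
    then have "qint q (real (\<Sum>j\<in>{k..<m}. n * \<nu> j)) powr (- s k) =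
        qint q (real n) powr (- s k) * qint (q ^ n) (real (\<Sum>j\<in>{k..<m}. \<nu> j)) powr (- s k)"
      using qint_nonneg[OF q, of "real n"] qint_nonneg[OF qn, of "real (\<Sum>j\<in>{k..<m}. \<nu> j)"]
      by (simp add: powr_mult)
    then show ?thesis using e1 by (simp add: algebra_simps)
  qed
  have "T q m s b (\<lambda>k. n * \<nu> k) = (\<Prod>k<m. complex_of_real (qint q (real n) powr (- s k)) *
      ((b k ^ n) powi (- int (\<nu> k)) *
       complex_of_real (qint (q ^ n) (real (\<Sum>j\<in>{k..<m}. \<nu> j)) powr (- s k))))"
    unfolding T_def using fac by (intro prod.cong) auto
  also have "\<dots> = (\<Prod>k<m. complex_of_real (qint q (real n) powr (- s k))) * T (q ^ n) m s (\<lambda>k. b k ^ n) \<nu>"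
    unfolding T_def by (simp add: prod.distrib)
  also have "(\<Prod>k<m. complex_of_real (qint q (real n) powr (- s k))) =
      complex_of_real (qint q (real n) powr (- (\<Sum>k<m. s k)))"
  proof -
    have "qint q (real n) \<noteq> 0"
      using qint_ge1[OF q, of "real n"] n by auto
    then have "qint q (real n) powr (\<Sum>k<m. - s k) = (\<Prod>k<m. qint q (real n) powr (- s k))"
      by (rule powr_sum)
    then show ?thesis by (simp add: sum_negf)
  qed
  finally show ?thesis .
qed

theorem theorem6p1:
  fixes q :: real and m n :: nat and s :: "nat \<Rightarrow> real" and b :: "nat \<Rightarrow> complex"
  assumes "0 < q" "q < 1" "0 < m" "0 < n"
    and "\<And>k. k < m \<Longrightarrow> 0 < s k"
    and "\<And>k. k < m \<Longrightarrow> 1 < norm (b k)"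
  shows "of_nat n ^ m * mplog (q ^ n) m s (\<lambda>k. b k ^ n)
       = complex_of_real (qint q (real n) powr (\<Sum>k<m. s k)) *
         (\<Sum>\<epsilon>\<in>Pi\<^sub>E {..<m} (\<lambda>_. {z::complex. z ^ n = 1}).
            mplog q m s (\<lambda>k. \<epsilon> k * b k))"
proof -
  note q = assms(1,2) and n = assms(4) and sp = assms(5) and bn = assms(6)
  define R where "R = {z::complex. z ^ n = 1}"
  define E where "E = Pi\<^sub>E {..<m} (\<lambda>_. R)"
  define P where "P = pos_tuples m"
  define D where "D \<mu> = (\<forall>k<m. n dvd \<mu> k)" for \<mu> :: "nat \<Rightarrow> nat"
  define S where "S = (\<Sum>k<m. s k)"
  define c where "c = qint q (real n)"
  have c1: "1 \<le> c" unfolding c_def using qint_ge1[OF q, of "real n"] n by auto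
  have finR: "finite R" unfolding R_def using n by (intro finite_roots_unity) auto
  have finE: "finite E" unfolding E_def using finR by (intro finite_PiE) auto
  have normR: "norm z = 1" if "z \<in> R" for z
  proof -
    have "norm z ^ n = 1 ^ n" using that by (simp add: R_def flip: norm_power)
    then show ?thesis using n power_eq_imp_eq_base[of "norm z" n 1] by simp
  qed
  have summ: "T q m s (\<lambda>k. \<epsilon> k * b k) summable_on P" if "\<epsilon> \<in> E" for \<epsilon>
  proof -
    have "norm (\<epsilon> k * b k) = norm (b k)" if "k < m" for k
      using \<open>\<epsilon> \<in> E\<close> that normR by (auto simp: E_def norm_mult)
    then show ?thesis unfolding P_def
      using q sp bn by (intro T_summable) (auto simp: less_imp_le)
  qed
  have summb: "T q m s b summable_on P"
    unfolding P_def using q sp bn by (intro T_summable) (auto simp: less_imp_le)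
  have pt: "(\<Sum>\<epsilon>\<in>E. T q m s (\<lambda>k. \<epsilon> k * b k) \<mu>) = (if D \<mu> then of_nat n ^ m else 0) * T q m s b \<mu>" for \<mu>
  proof -
    have "(\<Sum>\<epsilon>\<in>E. T q m s (\<lambda>k. \<epsilon> k * b k) \<mu>) = (\<Sum>\<epsilon>\<in>E. \<Prod>k<m. \<epsilon> k powi (- int (\<mu> k))) * T q m s b \<mu>"
      by (simp add: T_twist sum_distrib_right)
    also have "(\<Sum>\<epsilon>\<in>E. \<Prod>k<m. \<epsilon> k powi (- int (\<mu> k))) = (\<Prod>k<m. \<Sum>z\<in>R. z powi (- int (\<mu> k)))"
      unfolding E_def using finR by (intro prod_sum_PiE[symmetric]) auto
    also have "\<dots> = (\<Prod>k<m. if n dvd \<mu> k then of_nat n else 0)"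
      unfolding R_def using n by (simp add: roots_powi_sum)
    also have "\<dots> = (if D \<mu> then of_nat n ^ m else 0)" by (simp add: prod_ifs D_def)
    finally show ?thesis .
  qed
  define \<psi> :: "(nat \<Rightarrow> nat) \<Rightarrow> (nat \<Rightarrow> nat)" where "\<psi> \<nu> = (\<lambda>k. n * \<nu> k)" for \<nu>
  have inj: "inj_on \<psi> P"
    by (rule inj_onI) (use n in \<open>auto simp: \<psi>_def fun_eq_iff\<close>)
  have img: "\<psi> ` P = {\<mu>\<in>P. D \<mu>}"
  proof safe
    fix \<nu> assume "\<nu> \<in> P" then show "\<psi> \<nu> \<in> P" using n by (auto simp: P_def pos_tuples_def \<psi>_def)
  next
    fix \<nu> assume "\<nu> \<in> P" then show "D (\<psi> \<nu>)" by (auto simp: D_def \<psi>_def)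
  next
    fix \<mu> assume a: "\<mu> \<in> P" "D \<mu>"
    define \<nu> where "\<nu> k = \<mu> k div n" for k
    have e: "\<psi> \<nu> = \<mu>"
    proof
      fix k show "\<psi> \<nu> k = \<mu> k"
        using a by (cases "k < m") (auto simp: \<psi>_def \<nu>_def D_def P_def pos_tuples_def)
    qed
    have "1 \<le> \<mu> k div n" if km: "k < m" for k
    proof -
      have "n dvd \<mu> k" using a km by (auto simp: D_def)
      then obtain t where t: "\<mu> k = n * t" by blast
      have "1 \<le> \<mu> k" using a km by (auto simp: P_def pos_tuples_def)
      then show ?thesis using t n by (cases t) auto
    qed
    then have "\<nu> \<in> P"
      using a n by (auto simp: \<nu>_def P_def pos_tuples_def)
    with e show "\<mu> \<in> \<psi> ` P" by blast
  qed
  have "(\<Sum>\<epsilon>\<in>E. mplog q m s (\<lambda>k. \<epsilon> k * b k)) = (\<Sum>\<epsilon>\<in>E. infsum (T q m s (\<lambda>k. \<epsilon> k * b k)) P)"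
    by (simp add: mplog_T P_def)
  also have "\<dots> = infsum (\<lambda>\<mu>. \<Sum>\<epsilon>\<in>E. T q m s (\<lambda>k. \<epsilon> k * b k) \<mu>) P"
    using finE summ by (intro infsum_finite_sum[symmetric]) auto
  also have "\<dots> = infsum (\<lambda>\<mu>. (if D \<mu> then of_nat n ^ m else 0) * T q m s b \<mu>) P"
    by (simp add: pt)
  also have "\<dots> = infsum (\<lambda>\<mu>. of_nat n ^ m * T q m s b \<mu>) {\<mu>\<in>P. D \<mu>}"
    by (intro infsum_cong_neutral) auto
  also have "\<dots> = of_nat n ^ m * infsum (T q m s b) {\<mu>\<in>P. D \<mu>}"
    by (rule Infinite_Sum.infsum_cmult_right')
  also have "infsum (T q m s b) {\<mu>\<in>P. D \<mu>} = infsum (T q m s b \<circ> \<psi>) P"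
    unfolding img[symmetric] using inj by (rule infsum_reindex)
  also have "\<dots> = infsum (\<lambda>\<nu>. complex_of_real (c powr (- S)) * T (q ^ n) m s (\<lambda>k. b k ^ n) \<nu>) P"
    unfolding c_def S_def by (intro infsum_cong) (simp add: \<psi>_def T_scale[OF q n])
  also have "\<dots> = complex_of_real (c powr (- S)) * mplog (q ^ n) m s (\<lambda>k. b k ^ n)"
    by (simp add: infsum_cmult_right' mplog_T P_def)
  finally have RHS: "(\<Sum>\<epsilon>\<in>E. mplog q m s (\<lambda>k. \<epsilon> k * b k)) =
      of_nat n ^ m * (complex_of_real (c powr (- S)) * mplog (q ^ n) m s (\<lambda>k. b k ^ n))" .
  have cc: "complex_of_real (c powr S) * complex_of_real (c powr (- S)) = 1"
    using c1 by (simp add: powr_minus flip: of_real_mult)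
  show ?thesis
    unfolding RHS[unfolded E_def R_def] c_def[symmetric] S_def[symmetric]
    using cc by (simp add: algebra_simps)
qed

end
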